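(* In the non-exceptional case, for every integer $s$ the tuples $u=(u_1,\dots,u_{2r})$ and $v=v(s)=(v_1,\dots,v_{2r})$ defined by $$u_{2\rho-1}:=\check\mu_{a_{j_\rho}},\quad u_{2\rho}:=\check\mu_{1+a_{j_\rho}},\quad v_{2\rho-1}:=\lambda_{1+j_{\rho-1}}-s,\quad v_{2\rho}:=\lambda_{j_\rho}-s\qquad(\rho=1,\dots,r)$$ belong to $X_0^+(2r)$, with $u_i+u_{2r+1-i}=-w$ and $v_i+v_{2r+1-i}=w'+n-m-1-2s$ for all $i$.
   Context: Let $n,m\ge1$, not both $1$, and not both odd (non-exceptional case). For $N\ge1$: $L_0^+(N):=\{(w,l)\in\mathbb Z\times\mathbb Z^N:\ l_1>\dots>l_N,\ l_i+l_{N+1-i}=0,\ w+l_i\equiv N+1 \bmod 2\}$; $X^+(N):=\{x\in\mathbb Z^N:x_1\ge\dots\ge x_N\}$; $X_0^+(N):=\{x\in X^+(N):x_i+x_{N+1-i}\text{ independent of } i\}$. Bijection $L_0^+(N)\to X_0^+(N)$: $(w,l)\mapsto\mu$, $\mu_i=\frac{w+l_i+2i-1-N}{2}$; inverse $w=\mu_1+\mu_N$, $l_i=2\mu_i+N+1-w-2i$. Let $\mu\in X_0^+(n)$, $\nu\in X_0^+(m)$ correspond to $(w,l)$, $(w',l')$; $\check\mu_i:=-\mu_{n+1-i}$. Standing assumptions: $l_1>l'_1$ and $l_i\neq l'_j$ for all $i,j$. Position tuple: $a_j\in\{1,\dots,n-1\}$ unique with $l_{a_j}>l'_j\ge l_{1+a_j}$.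 Jump indices: $j\in\{1,\dots,m-1\}$ with $a_j<a_{j+1}$, listed $j_1<\dots<j_k$; $j_0:=0$, $j_{k+1}:=m$, $r:=k+1$. $\lambda_j:=\nu_j+a_j-j$. *)

theory Defs
  imports Main
begin

text \<open>Tuples x = (x_1,...,x_N) are functions nat => int, only indices 1..N matter.\<close>

definition X_plus :: "nat \<Rightarrow> (nat \<Rightarrow> int) \<Rightarrow> bool" where
  "X_plus N x \<longleftrightarrow> (\<forall>i j. 1 \<le> i \<and> i \<le> j \<and> j \<le> N \<longrightarrow> x j \<le> x i)"

definition X0_plus :: "nat \<Rightarrow> (nat \<Rightarrow> int) \<Rightarrow> bool" where
  "X0_plus N x \<longleftrightarrow> X_plus N x \<and> (\<exists>c. \<forall>i\<in>{1..N}. x i + x (N + 1 - i) = c)"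

text \<open>Inverse of the bijection L_0^+(N) -> X_0^+(N): w = mu_1 + mu_N,
  l_i = 2 mu_i + N + 1 - w - 2i.\<close>

definition wt :: "nat \<Rightarrow> (nat \<Rightarrow> int) \<Rightarrow> int" where
  "wt N mu = mu 1 + mu N"

definition lt :: "nat \<Rightarrow> (nat \<Rightarrow> int) \<Rightarrow> nat \<Rightarrow> int" where
  "lt N mu i = 2 * mu i + int N + 1 - wt N mu - 2 * int i"

definition checkv :: "nat \<Rightarrow> (nat \<Rightarrow> int) \<Rightarrow> nat \<Rightarrow> int" where
  "checkv N mu i = - mu (N + 1 - i)"

definition pos :: "nat \<Rightarrow> (nat \<Rightarrow> int) \<Rightarrow> (nat \<Rightarrow> int) \<Rightarrow> nat \<Rightarrow> nat" where
  "pos n l l' j = (THE a. a \<in> {1..n-1} \<and> l a > l' j \<and> l' j \<ge> l (1 + a))"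

definition jumps :: "nat \<Rightarrow> (nat \<Rightarrow> nat) \<Rightarrow> nat list" where
  "jumps m a = filter (\<lambda>j. a j < a (j + 1)) [1..<m]"

definition jidx :: "nat \<Rightarrow> (nat \<Rightarrow> nat) \<Rightarrow> nat \<Rightarrow> nat" where
  "jidx m a rho = (if rho = 0 then 0
                   else if rho \<le> length (jumps m a) then jumps m a ! (rho - 1)
                   else m)"

definition lam :: "(nat \<Rightarrow> int) \<Rightarrow> (nat \<Rightarrow> nat) \<Rightarrow> nat \<Rightarrow> int" where
  "lam nu a j = nu j + int (a j) - int j"

end

theory Submission
  imports Defs
begin


lemma X_plus_step:
  assumes "\<And>i. 1 \<le> i \<Longrightarrow> i < N \<Longrightarrow> x (i+1) \<le> x i"
  shows "X_plus N x"
  unfolding X_plus_def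
proof (intro allI impI)
  fix i j :: nat assume h: "1 \<le> i \<and> i \<le> j \<and> j \<le> N"
  have "i \<le> j \<Longrightarrow> j \<le> N \<Longrightarrow> x j \<le> x i"
  proof (induction j rule: dec_induct)
    case base then show ?case by simp
  next
    case (step j)
    then have "x (j+1) \<le> x j" using assms[of j] h by simp
    then show ?case using step by simp
  qed
  then show "x j \<le> x i" using h by simp
qed

lemma Xp_use:
  assumes "X_plus N x" "1 \<le> i" "i \<le> j" "j \<le> N"
  shows "x j \<le> x i"
  using assms unfolding X_plus_def by blast

lemma X0_sum:
  assumes "X0_plus N x" "i \<in> {1..N}"
  shows "x i + x (N+1-i) = x 1 + x N"
proof -
  obtain c where c: "\<forall>i\<in>{1..N}. x i + x (N + 1 - i) = c" using assms(1) unfolding X0_plus_def by blast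
  have "x 1 + x N = c" using c[rule_format, of 1] assms(2) by simp
  then show ?thesis using c assms(2) by simp
qed

lemma lt_dec:
  assumes "X_plus n mu" "1 \<le> i" "i \<le> j" "j \<le> n"
  shows "lt n mu i - lt n mu j \<ge> 2*(int j - int i)"
proof -
  have "mu j \<le> mu i" using assms unfolding X_plus_def by blast
  then show ?thesis unfolding lt_def by simp
qed

lemma lt_sym:
  assumes "X0_plus n mu" "i \<in> {1..n}"
  shows "lt n mu i + lt n mu (n+1-i) = 0"
proof -
  have s: "mu i + mu (n+1-i) = mu 1 + mu n" using X0_sum assms by blast
  have "int (n+1-i) = int n + 1 - int i" using assms(2) by auto
  then show ?thesis using s unfolding lt_def wt_def by simp
qed

lemma pos_exists:
  fixes n :: nat and l :: "nat \<Rightarrow> int"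
  assumes dec: "\<And>i j. 1\<le>i \<Longrightarrow> i<j \<Longrightarrow> j\<le>n \<Longrightarrow> l j < (l i::int)"
    and "1 \<le> n" "l 1 > x" "x \<ge> l n"
  shows "\<exists>b. b \<in> {1..n-1} \<and> l b > x \<and> x \<ge> l (1+b)"
proof -
  define S where "S = {b\<in>{1..n}. x < l b}"
  have fin: "finite S" unfolding S_def by simp
  have "1 \<in> S" unfolding S_def using assms by simp
  then have ne: "S \<noteq> {}" by blast
  define b where "b = Max S"
  have bS: "b \<in> S" unfolding b_def using fin ne by simp
  then have b1: "1 \<le> b" "b \<le> n" "x < l b" unfolding S_def by auto
  have "b \<noteq> n" using b1 assms(4) by auto
  then have bn: "1 + b \<le> n" using b1 by simp
  have "1 + b \<notin> S"
  proof
    assume "1 + b \<in> S"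
    then have "1 + b \<le> b" unfolding b_def using fin by simp
    then show False by simp
  qed
  then have "l (1+b) \<le> x" unfolding S_def using bn by auto
  then show ?thesis using b1 bn by (intro exI[of _ b]) auto
qed

lemma pos_unique:
  fixes n :: nat and l :: "nat \<Rightarrow> int"
  assumes dec: "\<And>i j. 1\<le>i \<Longrightarrow> i<j \<Longrightarrow> j\<le>n \<Longrightarrow> l j < (l i::int)"
    and "b \<in> {1..n-1}" "l b > x" "x \<ge> l (1+b)"
    and "b' \<in> {1..n-1}" "l b' > x" "x \<ge> l (1+b')"
  shows "b = b'"
proof (rule ccontr)
  assume ne: "b \<noteq> b'"
  have le: "\<And>i j. 1\<le>i \<Longrightarrow> i\<le>j \<Longrightarrow> j\<le>n \<Longrightarrow> l j \<le> l i"
  proof -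
    fix i j :: nat assume h: "1\<le>i" "i\<le>j" "j\<le>n"
    show "l j \<le> l i"
    proof (cases "i = j")
      case True then show ?thesis by simp
    next
      case False then show ?thesis using dec[of i j] h by simp
    qed
  qed
  show False
  proof (cases "b < b'")
    case True
    have "l b' \<le> l (1+b)" by (rule le) (use assms True in auto)
    then show False using assms by simp
  next
    case False
    then have "b' < b" using ne by simp
    have "l b \<le> l (1+b')" by (rule le) (use assms \<open>b' < b\<close> in auto)
    then show False using assms by simp
  qed
qed

lemma pos_char:
  assumes dec: "\<And>i j. 1\<le>i \<Longrightarrow> i<j \<Longrightarrow> j\<le>n \<Longrightarrow> l j < (l i::int)"
    and "1 \<le> n" "l 1 > l' j" "l' j \<ge> l n"
  shows "pos n l l' j \<in> {1..n-1} \<and> l (pos n l l' j) > l' j \<and> l' j \<ge> l (1 + pos n l l' j)"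
proof -
  have ex: "\<exists>!b. b \<in> {1..n-1} \<and> l b > l' j \<and> l' j \<ge> l (1+b)"
    using pos_exists[of n l, OF dec assms(2-4)] pos_unique[of n l, OF dec] by blast
  show ?thesis unfolding pos_def by (rule theI'[OF ex])
qed

lemma pos_eq:
  assumes dec: "\<And>i j. 1\<le>i \<Longrightarrow> i<j \<Longrightarrow> j\<le>n \<Longrightarrow> l j < (l i::int)"
    and "b \<in> {1..n-1}" "l b > l' j" "l' j \<ge> l (1+b)"
  shows "pos n l l' j = b"
  unfolding pos_def
  apply (rule the_equality)
  using assms apply blast
  using pos_unique[of n l, OF dec] assms by blast

lemma chain_eq:
  fixes p q :: nat
  assumes "p \<le> q" "\<And>j. p \<le> j \<Longrightarrow> j < q \<Longrightarrow> f j = f (j+1)"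
  shows "f p = f q"
  using assms
proof (induction q rule: dec_induct)
  case base then show ?case by simp
next
  case (step q) then show ?case by simp
qed


theorem lemma5p1:
  fixes n m :: nat and mu nu :: "nat \<Rightarrow> int" and s :: int and u v :: "nat \<Rightarrow> int"
  assumes "n \<ge> 1" and "m \<ge> 1" and "\<not> (n = 1 \<and> m = 1)" and "\<not> (odd n \<and> odd m)"
    and "X0_plus n mu" and "X0_plus m nu"
    and "lt n mu 1 > lt m nu 1"
    and "\<forall>i\<in>{1..n}. \<forall>j\<in>{1..m}. lt n mu i \<noteq> lt m nu j"
  defines "a \<equiv> pos n (lt n mu) (lt m nu)"
  defines "r \<equiv> length (jumps m a) + 1"
  assumes "\<forall>rho\<in>{1..r}.
      u (2*rho - 1) = checkv n mu (a (jidx m a rho)) \<and>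
      u (2*rho) = checkv n mu (1 + a (jidx m a rho)) \<and>
      v (2*rho - 1) = lam nu a (1 + jidx m a (rho - 1)) - s \<and>
      v (2*rho) = lam nu a (jidx m a rho) - s"
  shows "X0_plus (2*r) u \<and> X0_plus (2*r) v
    \<and> (\<forall>i\<in>{1..2*r}. u i + u (2*r + 1 - i) = - wt n mu)
    \<and> (\<forall>i\<in>{1..2*r}. v i + v (2*r + 1 - i) = wt m nu + int n - int m - 1 - 2*s)"
  proof -
  let ?L = "lt n mu" and ?L' = "lt m nu"
  note uv = assms(11)[rule_format]
  have Xmu: "X_plus n mu" and Xnu: "X_plus m nu" using assms(5,6) unfolding X0_plus_def by auto
  have decL: "\<And>i j. 1\<le>i \<Longrightarrow> i<j \<Longrightarrow> j\<le>n \<Longrightarrow> ?L j < ?L i"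
  proof -
    fix i j :: nat assume h: "1\<le>i" "i<j" "j\<le>n"
    then have "?L i - ?L j \<ge> 2*(int j - int i)" using lt_dec[OF Xmu] by simp
    then show "?L j < ?L i" using h by simp
  qed
  have leL: "\<And>i j. 1\<le>i \<Longrightarrow> i\<le>j \<Longrightarrow> j\<le>n \<Longrightarrow> ?L j \<le> ?L i"
  proof -
    fix i j :: nat assume h: "1\<le>i" "i\<le>j" "j\<le>n"
    then have "?L i - ?L j \<ge> 2*(int j - int i)" using lt_dec[OF Xmu] by simp
    then show "?L j \<le> ?L i" using h by simp
  qed
  have leL': "\<And>i j. 1\<le>i \<Longrightarrow> i\<le>j \<Longrightarrow> j\<le>m \<Longrightarrow> ?L' j \<le> ?L' i"
  proof -
    fix i j :: nat assume h: "1\<le>i" "i\<le>j" "j\<le>m"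
    then have "?L' i - ?L' j \<ge> 2*(int j - int i)" using lt_dec[OF Xnu] by simp
    then show "?L' j \<le> ?L' i" using h by simp
  qed
  have symL: "\<And>i. i\<in>{1..n} \<Longrightarrow> ?L i + ?L (n+1-i) = 0" using lt_sym[OF assms(5)] by blast
  have symL': "\<And>i. i\<in>{1..m} \<Longrightarrow> ?L' i + ?L' (m+1-i) = 0" using lt_sym[OF assms(6)] by blast
  have n2: "n \<ge> 2"
  proof (rule ccontr)
    assume "\<not> n \<ge> 2" then have "n = 1" using assms(1) by simp
    then have "?L 1 = 0" using symL[of 1] by simp
    moreover have "?L' 1 + ?L' m = 0" using symL'[of 1] assms(2) by simp
    moreover have "?L' m \<le> ?L' 1" using leL'[of 1 m] assms(2) by simp
    ultimately show False using assms(7) by simp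
  qed
  have rng: "\<And>j. j\<in>{1..m} \<Longrightarrow> ?L 1 > ?L' j \<and> ?L' j \<ge> ?L n"
  proof -
    fix j assume j: "j\<in>{1..m}"
    have "?L' j \<le> ?L' 1" using leL'[of 1 j] j by simp
    moreover have "?L' m \<le> ?L' j" using leL'[of j m] j by simp
    moreover have "?L' 1 + ?L' m = 0" using symL'[of 1] assms(2) by simp
    moreover have "?L 1 + ?L n = 0" using symL[of 1] assms(1) by simp
    ultimately show "?L 1 > ?L' j \<and> ?L' j \<ge> ?L n" using assms(7) by simp
  qed
  have achar: "\<And>j. j\<in>{1..m} \<Longrightarrow> a j \<in> {1..n-1} \<and> ?L (a j) > ?L' j \<and> ?L' j > ?L (1 + a j)"
  proof -
    fix j assume j: "j\<in>{1..m}"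
    have c: "a j \<in> {1..n-1} \<and> ?L (a j) > ?L' j \<and> ?L' j \<ge> ?L (1 + a j)"
      unfolding a_def using pos_char[of n ?L, OF decL assms(1)] rng[OF j] by blast
    then have "1 + a j \<in> {1..n}" by auto
    then have "?L (1+a j) \<noteq> ?L' j" using assms(8) j by blast
    then show "a j \<in> {1..n-1} \<and> ?L (a j) > ?L' j \<and> ?L' j > ?L (1 + a j)" using c by auto
  qed
  have amono: "\<And>j j'. j\<in>{1..m} \<Longrightarrow> j'\<in>{1..m} \<Longrightarrow> j \<le> j' \<Longrightarrow> a j \<le> a j'"
  proof -
    fix j j' assume h: "j\<in>{1..m}" "j'\<in>{1..m}" "j \<le> j'"
    show "a j \<le> a j'"
    proof (rule ccontr)
      assume "\<not> a j \<le> a j'"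
      then have lt: "1 + a j' \<le> a j" by simp
      have A: "a j \<in> {1..n-1} \<and> ?L (a j) > ?L' j \<and> ?L' j > ?L (1 + a j)" using achar h by blast
      have A': "a j' \<in> {1..n-1} \<and> ?L (a j') > ?L' j' \<and> ?L' j' > ?L (1 + a j')" using achar h by blast
      have "?L (a j) \<le> ?L (1 + a j')" by (rule leL) (use lt A in auto)
      moreover have "?L' j' \<le> ?L' j" by (rule leL') (use h in auto)
      ultimately show False using A A' by simp
    qed
  qed
  have asym: "\<And>j. j\<in>{1..m} \<Longrightarrow> a (m+1-j) = n - a j"
  proof -
    fix j assume j: "j\<in>{1..m}"
    have A: "a j \<in> {1..n-1} \<and> ?L (a j) > ?L' j \<and> ?L' j > ?L (1 + a j)" using achar j by blast
    have e1: "?L' (m+1-j) = - ?L' j" using symL'[OF j] by simp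
    have b: "n - a j \<in> {1..n-1}" using A by auto
    have "?L (1 + a j) + ?L (n+1-(1+a j)) = 0" using symL[of "1 + a j"] A by auto
    then have e2: "?L (n - a j) = - ?L (1 + a j)" by simp
    have "?L (a j) + ?L (n+1-a j) = 0" using symL[of "a j"] A by auto
    moreover have "n+1 - a j = 1 + (n - a j)" using A by auto
    ultimately have e3: "?L (1 + (n - a j)) = - ?L (a j)" by simp
    have "pos n ?L ?L' (m+1-j) = n - a j"
      by (rule pos_eq[of n ?L, OF decL b]) (use e1 e2 e3 A in simp_all)
    then show "a (m+1-j) = n - a j" unfolding a_def .
  qed
  have lstep: "\<And>j. 1 \<le> j \<Longrightarrow> j < m \<Longrightarrow> lam nu a (j+1) \<le> lam nu a j"
  proof -
    fix j assume j: "1 \<le> j" "j < m"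
    have jm: "j\<in>{1..m}" "j+1 \<in> {1..m}" using j by auto
    have A1: "a j \<in> {1..n-1} \<and> ?L (a j) > ?L' j \<and> ?L' j > ?L (1 + a j)" using achar jm by blast
    have A2: "a (j+1) \<in> {1..n-1} \<and> ?L (a (j+1)) > ?L' (j+1) \<and> ?L' (j+1) > ?L (1 + a (j+1))"
      using achar jm by blast
    have mo: "a j \<le> a (j+1)" using amono jm by simp
    have nu: "nu (j+1) \<le> nu j" using Xnu j unfolding X_plus_def by simp
    have d': "?L' j - ?L' (j+1) = 2*(nu j - nu (j+1)) + 2" unfolding lt_def by simp
    show "lam nu a (j+1) \<le> lam nu a j"
    proof (cases "a j = a (j+1)")
      case True then show ?thesis unfolding lam_def using nu by simp
    next
      case False
      then have le1: "1 + a j \<le> a (j+1)" using mo by simp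
      then have "?L (1 + a j) - ?L (a (j+1)) \<ge> 2*(int (a(j+1)) - int (1 + a j))"
        using lt_dec[OF Xmu, of "1+a j" "a (j+1)"] A2 by auto
      then show ?thesis unfolding lam_def using A1 A2 d' le1 by simp
    qed
  qed
  have lmono: "X_plus m (lam nu a)" by (rule X_plus_step) (use lstep in auto)
  have lsym: "\<And>j. j\<in>{1..m} \<Longrightarrow> lam nu a j + lam nu a (m+1-j) = wt m nu + int n - int m - 1"
  proof -
    fix j assume j: "j\<in>{1..m}"
    have s: "nu j + nu (m+1-j) = nu 1 + nu m" using X0_sum[OF assms(6) j] .
    have A: "a j \<in> {1..n-1}" using achar j by blast
    have "a (m+1-j) = n - a j" using asym j by blast
    moreover have "int (n - a j) = int n - int (a j)" using A by auto
    moreover have "int (m+1-j) = int m + 1 - int j" using j by auto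
    ultimately show "lam nu a j + lam nu a (m+1-j) = wt m nu + int n - int m - 1"
      unfolding lam_def wt_def using s by simp
  qed
  define J where "J = jumps m a"
  define k where "k = length J"
  have rk: "r = k + 1" unfolding r_def J_def k_def by simp
  have setJ: "set J = {j. 1 \<le> j \<and> j < m \<and> a j < a (j+1)}" unfolding J_def jumps_def by auto
  have sJ: "sorted_wrt (<) J" unfolding J_def jumps_def by (rule sorted_wrt_filter) (rule sorted_wrt_upt)
  have jd: "\<And>t. jidx m a t = (if t = 0 then 0 else if t \<le> k then J ! (t-1) else m)"
    unfolding jidx_def J_def k_def by simp
  have jinJ: "\<And>t. t\<in>{1..k} \<Longrightarrow> jidx m a t \<in> set J"
    using jd k_def by auto
  have jin: "\<And>t. t\<in>{1..r} \<Longrightarrow> 1 \<le> jidx m a t \<and> jidx m a t \<le> m"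
  proof -
    fix t assume t: "t\<in>{1..r}"
    show "1 \<le> jidx m a t \<and> jidx m a t \<le> m"
    proof (cases "t \<le> k")
      case True then have "jidx m a t \<in> set J" using jinJ t by auto
      then show ?thesis using setJ by auto
    next
      case False then show ?thesis using jd t assms(2) by auto
    qed
  qed
  have jstrict: "\<And>t t'. t < t' \<Longrightarrow> t' \<le> r \<Longrightarrow> jidx m a t < jidx m a t'"
  proof -
    fix t t' :: nat assume h: "t < t'" "t' \<le> r"
    show "jidx m a t < jidx m a t'"
    proof (cases "t = 0")
      case True then show ?thesis using jin[of t'] h jd by auto
    next
      case False
      then have tk: "t \<in> {1..k}" using h rk by auto
      then have tJ: "jidx m a t \<in> set J" using jinJ by blast
      show ?thesis
      proof (cases "t' \<le> k")
        case True
        have "J ! (t-1) < J ! (t'-1)" by (rule sorted_wrt_nth_less[OF sJ]) (use h True tk k_def in auto)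
        then show ?thesis using jd True tk h by auto
      next
        case False
        then show ?thesis using jd tJ setJ h by auto
      qed
    qed
  qed
  have jmono: "\<And>t t'. t \<le> t' \<Longrightarrow> t' \<le> r \<Longrightarrow> jidx m a t \<le> jidx m a t'"
    using jstrict by (metis le_eq_less_or_eq less_imp_le)
  have jump_sym: "\<And>j. j \<in> set J \<Longrightarrow> m - j \<in> set J"
  proof -
    fix j assume "j \<in> set J"
    then have j: "1 \<le> j" "j < m" "a j < a (j+1)" using setJ by auto
    have e1: "a (m - j) = n - a (j+1)" using asym[of "j+1"] j by auto
    have e2: "a (m - j + 1) = n - a j" using asym[of j] j by (simp add: Suc_diff_le)
    have "a (j+1) \<le> n - 1" using achar[of "j+1"] j by auto
    then have "a (m - j) < a (m - j + 1)" using e1 e2 j by simp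
    then show "m - j \<in> set J" using setJ j by auto
  qed
  have Jsym: "map (\<lambda>j. m - j) (rev J) = J"
  proof (rule strict_sorted_equal[OF sJ])
    have "sorted_wrt (\<lambda>x y. m - y < m - x) J"
    proof (rule sorted_wrt_mono_rel[OF _ sJ])
      fix x y assume xy: "x \<in> set J" "y \<in> set J" "x < y"
      then have "y < m" using setJ by blast
      then show "m - y < m - x" using xy(3) by simp
    qed
    then show "sorted_wrt (<) (map (\<lambda>j. m - j) (rev J))"
      by (simp add: sorted_wrt_map sorted_wrt_rev)
    show "set (map (\<lambda>j. m - j) (rev J)) = set J"
    proof
      show "set (map (\<lambda>j. m - j) (rev J)) \<subseteq> set J"
      proof
        fix x assume "x \<in> set (map (\<lambda>j. m - j) (rev J))"
        then obtain y where y: "y \<in> set J" "x = m - y" by auto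
        then show "x \<in> set J" using jump_sym by blast
      qed
      show "set J \<subseteq> set (map (\<lambda>j. m - j) (rev J))"
      proof
        fix x assume x: "x \<in> set J"
        then have "x < m" using setJ by auto
        then have "x = m - (m - x)" by simp
        moreover have "m - x \<in> set J" using jump_sym x by blast
        ultimately show "x \<in> set (map (\<lambda>j. m - j) (rev J))" by auto
      qed
    qed
  qed
  have Jnth: "\<And>i. i < k \<Longrightarrow> J ! i = m - J ! (k - 1 - i)"
  proof -
    fix i assume i: "i < k"
    have "J ! i = (map (\<lambda>j. m - j) (rev J)) ! i" using Jsym by simp
    also have "\<dots> = m - J ! (k - 1 - i)" using i k_def by (simp add: rev_nth)
    finally show "J ! i = m - J ! (k - 1 - i)" .
  qed
  have jrev: "\<And>rho. rho\<in>{1..r} \<Longrightarrow> jidx m a (r+1-rho) = m - jidx m a (rho-1)"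
  proof -
    fix rho assume rho: "rho\<in>{1..r}"
    show "jidx m a (r+1-rho) = m - jidx m a (rho-1)"
    proof (cases "rho = 1")
      case True then show ?thesis using jd rk by simp
    next
      case False
      then have t: "rho - 1 \<in> {1..k}" using rho rk by auto
      have "J ! (k - (rho - 1)) = m - J ! (k - 1 - (k - (rho - 1)))" by (rule Jnth) (use t in auto)
      moreover have "k - 1 - (k - (rho - 1)) = rho - 1 - 1" using t by auto
      moreover have "r + 1 - rho = k - (rho - 1) + 1" using t rk by auto
      ultimately show ?thesis using jd t False by auto
    qed
  qed
  have block: "\<And>rho. rho\<in>{1..r} \<Longrightarrow> a (1 + jidx m a (rho-1)) = a (jidx m a rho)"
  proof -
    fix rho assume rho: "rho\<in>{1..r}"
    have pq: "1 + jidx m a (rho-1) \<le> jidx m a rho" using jstrict[of "rho-1" rho] rho by auto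
    have q: "jidx m a rho \<le> m" using jin rho by blast
    show "a (1 + jidx m a (rho-1)) = a (jidx m a rho)"
    proof (rule chain_eq[OF pq])
      fix j assume j: "1 + jidx m a (rho-1) \<le> j" "j < jidx m a rho"
      have nJ: "j \<notin> set J"
      proof
        assume "j \<in> set J"
        then obtain i where i: "i < k" "J ! i = j" using k_def by (auto simp: in_set_conv_nth)
        have ji: "jidx m a (i+1) = j" using jd i by simp
        show False
        proof (cases "i + 1 \<le> rho - 1")
          case True
          then have "jidx m a (i+1) \<le> jidx m a (rho-1)" using jmono rho by auto
          then show False using ji j by simp
        next
          case False
          then have "jidx m a rho \<le> jidx m a (i+1)" using jmono i rk by auto
          then show False using ji j by simp
        qed
      qed
      have jr: "1 \<le> j" "j < m" using j q by auto
      then have "\<not> a j < a (j+1)" using nJ setJ by auto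
      moreover have "a j \<le> a (j+1)" using amono jr by auto
      ultimately show "a j = a (j+1)" by simp
    qed
  qed
  have cmono: "\<And>x y. 1 \<le> x \<Longrightarrow> x \<le> y \<Longrightarrow> y \<le> n \<Longrightarrow> checkv n mu y \<le> checkv n mu x"
  proof -
    fix x y :: nat assume h: "1 \<le> x" "x \<le> y" "y \<le> n"
    have b: "1 \<le> n+1-y" "n+1-y \<le> n+1-x" "n+1-x \<le> n" using h by auto
    have "mu (n+1-x) \<le> mu (n+1-y)" using Xmu b unfolding X_plus_def by blast
    then show "checkv n mu y \<le> checkv n mu x" unfolding checkv_def by simp
  qed
  have Ain: "\<And>rho. rho\<in>{1..r} \<Longrightarrow> a (jidx m a rho) \<in> {1..n-1}"
    using jin achar by auto
  have U1: "\<And>rho. rho\<in>{1..r} \<Longrightarrow> u (2*rho-1) + u (2*(r+1-rho)) = - wt n mu"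
  proof -
    fix rho assume rho: "rho\<in>{1..r}"
    have rho': "r+1-rho \<in> {1..r}" using rho by auto
    have j0: "1 + jidx m a (rho-1) \<in> {1..m}"
      using jstrict[of "rho-1" rho] jin[of rho] rho by auto
    have "a (jidx m a (r+1-rho)) = a (m + 1 - (1 + jidx m a (rho-1)))" using jrev[OF rho] by simp
    also have "\<dots> = n - a (1 + jidx m a (rho-1))" using asym[OF j0] .
    also have "\<dots> = n - a (jidx m a rho)" using block[OF rho] by simp
    finally have e: "a (jidx m a (r+1-rho)) = n - a (jidx m a rho)" .
    define A where "A = a (jidx m a rho)"
    have A: "A \<in> {1..n-1}" using Ain rho A_def by blast
    have u1: "u (2*rho-1) = - mu (n+1-A)" using uv[OF rho] A_def checkv_def by simp
    have "u (2*(r+1-rho)) = checkv n mu (1 + (n - A))" using uv[OF rho'] e A_def by simp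
    also have "\<dots> = - mu A"
    proof -
      have "n + 1 - (1 + (n - A)) = A" using A by auto
      then show ?thesis unfolding checkv_def by simp
    qed
    finally have u2: "u (2*(r+1-rho)) = - mu A" .
    have "mu A + mu (n+1-A) = mu 1 + mu n" using X0_sum[OF assms(5), of A] A by auto
    then show "u (2*rho-1) + u (2*(r+1-rho)) = - wt n mu" using u1 u2 wt_def by simp
  qed
  have V1: "\<And>rho. rho\<in>{1..r} \<Longrightarrow> v (2*rho-1) + v (2*(r+1-rho)) = wt m nu + int n - int m - 1 - 2*s"
  proof -
    fix rho assume rho: "rho\<in>{1..r}"
    have rho': "r+1-rho \<in> {1..r}" using rho by auto
    have j0: "1 + jidx m a (rho-1) \<in> {1..m}"
      using jstrict[of "rho-1" rho] jin[of rho] rho by auto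
    have e: "jidx m a (r+1-rho) = m + 1 - (1 + jidx m a (rho-1))" using jrev[OF rho] by simp
    have "v (2*rho-1) = lam nu a (1 + jidx m a (rho-1)) - s" using uv[OF rho] by simp
    moreover have "v (2*(r+1-rho)) = lam nu a (m + 1 - (1 + jidx m a (rho-1))) - s"
      using uv[OF rho'] e by simp
    ultimately show "v (2*rho-1) + v (2*(r+1-rho)) = wt m nu + int n - int m - 1 - 2*s"
      using lsym[OF j0] by simp
  qed
  have split: "\<And>i. i\<in>{1..2*r} \<Longrightarrow> \<exists>rho\<in>{1..r}. i = 2*rho-1 \<or> i = 2*rho"
  proof -
    fix i assume i: "i\<in>{1..2*r}"
    show "\<exists>rho\<in>{1..r}. i = 2*rho-1 \<or> i = 2*rho"
      by (rule bexI[of _ "(i+1) div 2"]) (use i in auto)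
  qed
  have Usum: "\<forall>i\<in>{1..2*r}. u i + u (2*r + 1 - i) = - wt n mu"
  proof
    fix i assume i: "i\<in>{1..2*r}"
    then obtain rho where rho: "rho\<in>{1..r}" "i = 2*rho-1 \<or> i = 2*rho" using split by blast
    show "u i + u (2*r + 1 - i) = - wt n mu"
    proof (cases "i = 2*rho-1")
      case True
      then have "2*r+1-i = 2*(r+1-rho)" using rho by auto
      then show ?thesis using U1[OF rho(1)] True by simp
    next
      case False
      then have ie: "i = 2*rho" using rho by auto
      have rho': "r+1-rho \<in> {1..r}" using rho by auto
      have "2*r+1-i = 2*(r+1-rho)-1" "2*(r+1-(r+1-rho)) = i" using rho ie by auto
      then show ?thesis using U1[OF rho'] by (simp add: add.commute)
    qed
  qed
  have Vsum: "\<forall>i\<in>{1..2*r}. v i + v (2*r + 1 - i) = wt m nu + int n - int m - 1 - 2*s"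
  proof
    fix i assume i: "i\<in>{1..2*r}"
    then obtain rho where rho: "rho\<in>{1..r}" "i = 2*rho-1 \<or> i = 2*rho" using split by blast
    show "v i + v (2*r + 1 - i) = wt m nu + int n - int m - 1 - 2*s"
    proof (cases "i = 2*rho-1")
      case True
      then have "2*r+1-i = 2*(r+1-rho)" using rho by auto
      then show ?thesis using V1[OF rho(1)] True by simp
    next
      case False
      then have ie: "i = 2*rho" using rho by auto
      have rho': "r+1-rho \<in> {1..r}" using rho by auto
      have "2*r+1-i = 2*(r+1-rho)-1" "2*(r+1-(r+1-rho)) = i" using rho ie by auto
      then show ?thesis using V1[OF rho'] by (simp add: add.commute)
    qed
  qed
  have Ustep: "X_plus (2*r) u"
  proof (rule X_plus_step)
    fix i assume i: "1 \<le> i" "i < 2*r"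
    then have "i \<in> {1..2*r}" by simp
    then obtain rho where rho: "rho\<in>{1..r}" "i = 2*rho-1 \<or> i = 2*rho" using split by blast
    show "u (i+1) \<le> u i"
    proof (cases "i = 2*rho-1")
      case True
      then have i1: "i+1 = 2*rho" using rho by auto
      have A: "1 \<le> a (jidx m a rho)" "1 + a (jidx m a rho) \<le> n" using Ain[OF rho(1)] by auto
      have "checkv n mu (1 + a (jidx m a rho)) \<le> checkv n mu (a (jidx m a rho))"
        by (rule cmono) (use A in auto)
      then show ?thesis using uv[OF rho(1)] True i1 by simp
    next
      case False
      then have ie: "i = 2*rho" using rho by auto
      then have rk': "rho + 1 \<le> r" using i by auto
      have rho1: "rho+1 \<in> {1..r}" using rk' by auto
      have i1: "i + 1 = 2*(rho+1) - 1" using ie by simp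
      have "jidx m a rho \<in> set J" by (rule jinJ) (use rho rk' rk in auto)
      then have jj: "a (jidx m a rho) < a (jidx m a rho + 1)" "jidx m a rho < m" "1 \<le> jidx m a rho"
        using setJ by auto
      have q1: "jidx m a rho + 1 \<le> jidx m a (rho+1)" using jstrict[of rho "rho+1"] rk' by simp
      have q2: "jidx m a (rho+1) \<le> m" using jin[OF rho1] by simp
      have "a (jidx m a rho + 1) \<le> a (jidx m a (rho+1))"
        by (rule amono) (use jj q1 q2 in auto)
      then have le: "1 + a (jidx m a rho) \<le> a (jidx m a (rho+1))" using jj by simp
      have le2: "a (jidx m a (rho+1)) \<le> n" using Ain[OF rho1] by auto
      have "checkv n mu (a (jidx m a (rho+1))) \<le> checkv n mu (1 + a (jidx m a rho))"
        by (rule cmono) (use le le2 in auto)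
      then show ?thesis using uv[OF rho(1)] uv[OF rho1] i1 ie by simp
    qed
  qed
  have Vstep: "X_plus (2*r) v"
  proof (rule X_plus_step)
    fix i assume i: "1 \<le> i" "i < 2*r"
    then have "i \<in> {1..2*r}" by simp
    then obtain rho where rho: "rho\<in>{1..r}" "i = 2*rho-1 \<or> i = 2*rho" using split by blast
    show "v (i+1) \<le> v i"
    proof (cases "i = 2*rho-1")
      case True
      then have i1: "i+1 = 2*rho" using rho by auto
      have q1: "1 + jidx m a (rho-1) \<le> jidx m a rho" using jstrict[of "rho-1" rho] rho by auto
      have q2: "jidx m a rho \<le> m" using jin[OF rho(1)] by simp
      have "lam nu a (jidx m a rho) \<le> lam nu a (1 + jidx m a (rho-1))"
        by (rule Xp_use[OF lmono]) (use q1 q2 in auto)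
      then show ?thesis using uv[OF rho(1)] True i1 by simp
    next
      case False
      then have ie: "i = 2*rho" using rho by auto
      then have rk': "rho + 1 \<le> r" using i by auto
      have rho1: "rho+1 \<in> {1..r}" using rk' by auto
      have i1: "i + 1 = 2*(rho+1) - 1" using ie by simp
      have q1: "jidx m a rho + 1 \<le> jidx m a (rho+1)" using jstrict[of rho "rho+1"] rk' by simp
      have q2: "jidx m a (rho+1) \<le> m" using jin[OF rho1] by simp
      have q3: "1 \<le> jidx m a rho" using jin[OF rho(1)] by simp
      have "lam nu a (1 + jidx m a rho) \<le> lam nu a (jidx m a rho)"
        by (rule Xp_use[OF lmono]) (use q1 q2 q3 in auto)
      then show ?thesis using uv[OF rho(1)] uv[OF rho1] i1 ie by simp
    qed
  qed
  show ?thesis unfolding X0_plus_def using Ustep Vstep Usum Vsum by blast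
qed

end
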